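(* A complex symmetric tensor $S\in\mathbb{C}^{n\times n\times n}$ of order 3 belongs to $\mathrm{OW}_n(\mathbb{C})$ if and only if its slices $S_1,\dots,S_n$ are diagonalizable and pairwise commute.
   Context: For a symmetric tensor $S$ its $k$-th slice is $S_k=(S_{ijk})_{1\le i,j\le n}$. Identify $S$ with the cubic form $f(x)=\sum_{i,j,k}S_{ijk}x_ix_jx_k$. $\mathrm{OW}_n(\mathbb{C})$ is the set of $f\in\mathbb{C}[x_1,\dots,x_n]_3$ that can be written $f(x)=g(Ax)$ with $A\in M_n(\mathbb{C})$ satisfying $A^TA=\mathrm{Id}$ and $g=\alpha_1x_1^3+\cdots+\alpha_nx_n^3$, $\alpha_i\in\mathbb{C}$. *)

theory Defs
  imports "HOL-Analysis.Analysis"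
begin

text \<open>Order-3 tensors over C^n, indexed by a finite type 'n (n = CARD('n)).\<close>

definition symmetric_tensor :: "('n::finite \<Rightarrow> 'n \<Rightarrow> 'n \<Rightarrow> complex) \<Rightarrow> bool" where
  "symmetric_tensor S \<longleftrightarrow>
     (\<forall>i j k. S i j k = S j i k \<and> S i j k = S i k j \<and> S i j k = S k j i)"

definition slice :: "('n::finite \<Rightarrow> 'n \<Rightarrow> 'n \<Rightarrow> complex) \<Rightarrow> 'n \<Rightarrow> complex^'n^'n" where
  "slice S k = (\<chi> i j. S i j k)"

definition cubic_form :: "('n::finite \<Rightarrow> 'n \<Rightarrow> 'n \<Rightarrow> complex) \<Rightarrow> complex^'n \<Rightarrow> complex" where
  "cubic_form S x = (\<Sum>i\<in>UNIV. \<Sum>j\<in>UNIV. \<Sum>k\<in>UNIV. S i j k * x$i * x$j * x$k)"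

definition diagonal_cmat :: "complex^'n^'n \<Rightarrow> bool" where
  "diagonal_cmat D \<longleftrightarrow> (\<forall>i j. i \<noteq> j \<longrightarrow> D$i$j = 0)"

definition diagonalizable_cmat :: "complex^'n^'n \<Rightarrow> bool" where
  "diagonalizable_cmat M \<longleftrightarrow>
     (\<exists>(P::complex^'n^'n) (D::complex^'n^'n). invertible P \<and> diagonal_cmat D \<and> M = P ** D ** matrix_inv P)"

text \<open>OW_n(C): cubic forms f(x) = g(Ax) with A^T A = Id (complex orthogonal,
  plain transpose) and g = sum alpha_i x_i^3. Since C is infinite, equality of
  polynomials is equality of polynomial functions.\<close>
definition in_OW :: "('n::finite \<Rightarrow> 'n \<Rightarrow> 'n \<Rightarrow> complex) \<Rightarrow> bool" where
  "in_OW S \<longleftrightarrow>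
     (\<exists>(A::complex^'n^'n) (\<alpha>::'n \<Rightarrow> complex).
        transpose A ** A = mat 1 \<and>
        (\<forall>x. cubic_form S x = (\<Sum>i\<in>UNIV. \<alpha> i * ((A *v x)$i)^3)))"

end

theory Submission
  imports Defs
begin


definition trif :: "('n::finite \<Rightarrow> 'n \<Rightarrow> 'n \<Rightarrow> complex) \<Rightarrow> complex^'n \<Rightarrow> complex^'n \<Rightarrow> complex^'n \<Rightarrow> complex" where
  "trif D x y z = (\<Sum>i\<in>UNIV. \<Sum>j\<in>UNIV. \<Sum>k\<in>UNIV. D i j k * x$i * y$j * z$k)"

lemma trif_add1: "trif D (x + y) z w = trif D x z w + trif D y z w"
  by (simp add: trif_def algebra_simps sum.distrib)
lemma trif_add2: "trif D z (x + y) w = trif D z x w + trif D z y w"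
  by (simp add: trif_def algebra_simps sum.distrib)
lemma trif_add3: "trif D z w (x + y) = trif D z w x + trif D z w y"
  by (simp add: trif_def algebra_simps sum.distrib)

lemma trif_sym12:
  assumes "symmetric_tensor D" shows "trif D x y z = trif D y x z"
proof -
  have "trif D x y z = (\<Sum>j\<in>UNIV. \<Sum>i\<in>UNIV. \<Sum>k\<in>UNIV. D i j k * x$i * y$j * z$k)"
    unfolding trif_def by (rule sum.swap)
  also have "\<dots> = trif D y x z" unfolding trif_def
    using assms unfolding symmetric_tensor_def
    by (intro sum.cong refl) (metis mult.commute mult.left_commute)
  finally show ?thesis .
qed

lemma trif_sym23:
  assumes "symmetric_tensor D" shows "trif D x y z = trif D x z y"
proof -
  have "trif D x y z = (\<Sum>i\<in>UNIV. \<Sum>k\<in>UNIV. \<Sum>j\<in>UNIV. D i j k * x$i * y$j * z$k)"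
    unfolding trif_def by (intro sum.cong refl sum.swap)
  also have "\<dots> = trif D x z y" unfolding trif_def
    using assms unfolding symmetric_tensor_def
    by (intro sum.cong refl) (metis mult.commute mult.left_commute)
  finally show ?thesis .
qed

lemma cubic_trif: "cubic_form D x = trif D x x x"
  by (simp add: cubic_form_def trif_def)

lemma polar:
  assumes "symmetric_tensor D"
  shows "cubic_form D (x+y+z) - cubic_form D (x+y) - cubic_form D (x+z) - cubic_form D (y+z)
     + cubic_form D x + cubic_form D y + cubic_form D z = 6 * trif D x y z"
proof -
  note s12 = trif_sym12[OF assms] and s23 = trif_sym23[OF assms]
  have a: "trif D y x x = trif D x x y" "trif D x y x = trif D x x y"
    "trif D z x x = trif D x x z" "trif D x z x = trif D x x z"
    "trif D y y x = trif D x y y" "trif D y x y = trif D x y y"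
    "trif D z z x = trif D x z z" "trif D z x z = trif D x z z"
    "trif D z y y = trif D y y z" "trif D y z y = trif D y y z"
    "trif D z z y = trif D y z z" "trif D z y z = trif D y z z"
    "trif D y x z = trif D x y z" "trif D x z y = trif D x y z"
    "trif D y z x = trif D x y z" "trif D z x y = trif D x y z" "trif D z y x = trif D x y z"
    by (metis s12 s23)+
  show ?thesis unfolding cubic_trif
    apply (simp only: trif_add1 trif_add2 trif_add3 a)
    by algebra
qed

lemma trif_axis: "trif D (axis i 1) (axis j 1) (axis k 1) = D i j k"
proof -
  have m: "\<And>(a::complex) P. a * (if P then 1 else 0) = (if P then a else 0)" by simp
  show ?thesis unfolding trif_def axis_def by (simp add: m sum.delta)
qed

lemma cubic_zero_tensor:
  assumes "symmetric_tensor D" "\<And>x. cubic_form D x = 0"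
  shows "D i j k = 0"
  using polar[OF assms(1), of "axis i 1" "axis j 1" "axis k 1"] assms(2) trif_axis[of D i j k]
  by simp



lemma cube_sum: "(\<Sum>i\<in>(UNIV::'n::finite set). f i)^3 = (\<Sum>i\<in>UNIV. \<Sum>j\<in>UNIV. \<Sum>k\<in>UNIV. f i * f j * (f k::complex))"
proof -
  have "(\<Sum>i\<in>(UNIV::'n set). f i)^3 = (\<Sum>i\<in>UNIV. f i * ((\<Sum>j\<in>UNIV. f j) * (\<Sum>k\<in>UNIV. f k)))"
    by (simp add: power3_eq_cube sum_distrib_right mult.assoc)
  also have "\<dots> = (\<Sum>i\<in>UNIV. f i * (\<Sum>j\<in>UNIV. \<Sum>k\<in>UNIV. f j * f k))"
    by (simp only: sum_product)
  also have "\<dots> = (\<Sum>i\<in>UNIV. \<Sum>j\<in>UNIV. \<Sum>k\<in>UNIV. f i * f j * f k)"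
    by (simp only: sum_distrib_left mult.assoc)
  finally show ?thesis .
qed

lemma cubic_decomp:
  fixes q :: "'m::finite \<Rightarrow> complex^'n::finite"
  shows "cubic_form (\<lambda>i j k. \<Sum>a\<in>UNIV. \<beta> a * q a $ i * q a $ j * q a $ k) x
     = (\<Sum>a\<in>UNIV. \<beta> a * (\<Sum>i\<in>UNIV. q a $ i * x$i)^3)"
proof -
  have "cubic_form (\<lambda>i j k. \<Sum>a\<in>UNIV. \<beta> a * q a $ i * q a $ j * q a $ k) x
     = (\<Sum>i\<in>UNIV. \<Sum>j\<in>UNIV. \<Sum>k\<in>UNIV. \<Sum>a\<in>UNIV. \<beta> a * ((q a $ i * x$i) * (q a $ j * x$j) * (q a $ k * x$k)))"
    unfolding cubic_form_def sum_distrib_right by (intro sum.cong refl) (simp add: mult_ac)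
  also have "\<dots> = (\<Sum>i\<in>UNIV. \<Sum>j\<in>UNIV. \<Sum>a\<in>UNIV. \<Sum>k\<in>UNIV. \<beta> a * ((q a $ i * x$i) * (q a $ j * x$j) * (q a $ k * x$k)))"
    by (intro sum.cong refl sum.swap)
  also have "\<dots> = (\<Sum>i\<in>UNIV. \<Sum>a\<in>UNIV. \<Sum>j\<in>UNIV. \<Sum>k\<in>UNIV. \<beta> a * ((q a $ i * x$i) * (q a $ j * x$j) * (q a $ k * x$k)))"
    by (intro sum.cong refl sum.swap)
  also have "\<dots> = (\<Sum>a\<in>UNIV. \<Sum>i\<in>UNIV. \<Sum>j\<in>UNIV. \<Sum>k\<in>UNIV. \<beta> a * ((q a $ i * x$i) * (q a $ j * x$j) * (q a $ k * x$k)))"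
    by (rule sum.swap)
  also have "\<dots> = (\<Sum>a\<in>UNIV. \<beta> a * (\<Sum>i\<in>UNIV. q a $ i * x$i)^3)"
    unfolding cube_sum sum_distrib_left by simp
  finally show ?thesis .
qed

lemma symm_decomp: "symmetric_tensor (\<lambda>i j k. \<Sum>a\<in>UNIV. \<beta> a * q a $ i * q a $ j * (q a $ k :: complex))"
  unfolding symmetric_tensor_def by (simp add: mult_ac)

lemma cubic_diff: "cubic_form (\<lambda>i j k. S i j k - T i j k) x = cubic_form S x - cubic_form T x"
  unfolding cubic_form_def sum_subtractf[symmetric] by (intro sum.cong refl) (simp add: left_diff_distrib)

lemma tensor_eq:
  assumes "symmetric_tensor S" "symmetric_tensor T" "\<And>x. cubic_form S x = cubic_form T x"
  shows "S = T"
proof -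
  have sD: "symmetric_tensor (\<lambda>i j k. S i j k - T i j k)"
    using assms(1,2) unfolding symmetric_tensor_def by metis
  have "S i j k - T i j k = 0" for i j k
    by (rule cubic_zero_tensor[OF sD]) (simp add: cubic_diff assms(3))
  then show ?thesis by (auto intro!: ext)
qed

lemma matrix_inv_eq:
  fixes P :: "'a::field^'n::finite^'n"
  assumes "P ** X = mat 1" "X ** P = mat 1" shows "matrix_inv P = X"
  unfolding matrix_inv_def
proof (rule some_equality)
  show "P ** X = mat 1 \<and> X ** P = mat 1" using assms by simp
  fix Y assume "P ** Y = mat 1 \<and> Y ** P = mat 1"
  then have "Y = Y ** (P ** X)" "Y ** P = mat 1" using assms by (simp_all add: matrix_mul_rid)
  then show "Y = X" by (metis matrix_mul_assoc matrix_mul_lid)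
qed

definition dg :: "('n \<Rightarrow> complex) \<Rightarrow> complex^'n^'n::finite" where
  "dg d = (\<chi> a b. if a = b then d a else 0)"

lemma dg_diag: "diagonal_cmat (dg d)" unfolding diagonal_cmat_def dg_def by simp

lemma dg_mult: "dg d ** dg e = dg (\<lambda>a. d a * e a)"
proof -
  have "(dg d ** dg e) $ a $ b = dg (\<lambda>a. d a * e a) $ a $ b" for a b
  proof -
    have "(dg d ** dg e) $ a $ b = (\<Sum>c\<in>UNIV. (if a = c then d a else 0) * (if c = b then e c else 0))"
      by (simp add: matrix_matrix_mult_def dg_def)
    also have "\<dots> = (\<Sum>c\<in>UNIV. if c = a then (if a = b then d a * e a else 0) else 0)"
      by (intro sum.cong) auto
    finally show ?thesis by (simp add: dg_def)
  qed
  then show ?thesis by (simp add: vec_eq_iff)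
qed

lemma tdg_entry: "(transpose A ** dg d) $ i $ b = A$b$i * d b"
proof -
  have "(transpose A ** dg d) $ i $ b = (\<Sum>a\<in>UNIV. A$a$i * (if a = b then d a else 0))"
    by (simp add: matrix_matrix_mult_def transpose_def dg_def)
  also have "\<dots> = (\<Sum>a\<in>UNIV. if a = b then A$a$i * d a else 0)"
    by (intro sum.cong) auto
  finally show ?thesis by simp
qed

lemma tdg: "(transpose A ** dg d ** B)$i$j = (\<Sum>a\<in>UNIV. A$a$i * d a * B$a$j)"
  by (simp add: matrix_matrix_mult_def[of "transpose A ** dg d"] tdg_entry)

lemma forward:
  fixes S :: "'n::finite \<Rightarrow> 'n \<Rightarrow> 'n \<Rightarrow> complex"
  assumes sym: "symmetric_tensor S" and "in_OW S"
  shows "(\<forall>k. diagonalizable_cmat (slice S k)) \<and>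
            (\<forall>k l. slice S k ** slice S l = slice S l ** slice S k)"
proof -
  obtain A :: "complex^'n^'n" and \<alpha> where A1: "transpose A ** A = mat 1"
    and cf: "\<And>x. cubic_form S x = (\<Sum>i\<in>UNIV. \<alpha> i * ((A *v x)$i)^3)"
    using assms(2) unfolding in_OW_def by blast
  have A2: "A ** transpose A = mat 1" using A1 by (rule matrix_left_right_inverse1)
  define T where "T = (\<lambda>i j k. \<Sum>a\<in>UNIV. \<alpha> a * A $ a $ i * A $ a $ j * A $ a $ k)"
  have "S = T"
  proof (rule tensor_eq[OF sym])
    show "symmetric_tensor T" unfolding T_def by (rule symm_decomp)
    fix x show "cubic_form S x = cubic_form T x"
      unfolding cf T_def cubic_decomp by (simp add: matrix_vector_mult_def mult.commute)
  qed
  have sl: "slice S k = transpose A ** dg (\<lambda>a. \<alpha> a * A$a$k) ** A" for k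
    unfolding \<open>S = T\<close> T_def slice_def vec_eq_iff tdg by (simp add: mult_ac)
  have "diagonalizable_cmat (slice S k)" for k
    unfolding diagonalizable_cmat_def sl
    apply (rule exI[of _ "transpose A"], rule exI[of _ "dg (\<lambda>a. \<alpha> a * A$a$k)"])
    using A1 A2 matrix_inv_eq[OF A1 A2] by (auto simp: invertible_def dg_diag)
  moreover have "slice S k ** slice S l = slice S l ** slice S k" for k l
  proof -
    have e: "transpose A ** D ** A ** (transpose A ** E ** A) = transpose A ** (D ** E) ** A" for D E :: "complex^'n^'n"
      by (metis A2 matrix_mul_assoc matrix_mul_rid)
    show ?thesis unfolding sl e dg_mult by (simp add: mult.commute)
  qed
  ultimately show ?thesis by blast
qed



lemma invertible_inv:
  assumes "invertible (P::'a::field^'n::finite^'n)"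
  shows "P ** matrix_inv P = mat 1" "matrix_inv P ** P = mat 1"
proof -
  obtain X where "P ** X = mat 1" "X ** P = mat 1" using assms unfolding invertible_def by blast
  then have "matrix_inv P = X" by (rule matrix_inv_eq)
  then show "P ** matrix_inv P = mat 1" "matrix_inv P ** P = mat 1"
    using \<open>P ** X = mat 1\<close> \<open>X ** P = mat 1\<close> by simp_all
qed

lemma smult_sum: "(c::'a::comm_ring_1) *s sum f A = (\<Sum>x\<in>A. c *s f x)"
  by (induction A rule: infinite_finite_induct) (simp_all add: vector_add_ldistrib)

lemma eigen_decomp:
  fixes M :: "complex^'n::finite^'n"
  assumes "diagonalizable_cmat M"
  shows "\<exists>L u. finite L \<and> (\<forall>l\<in>L. M *v u l = l *s u l) \<and> x = (\<Sum>l\<in>L. u l)"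
proof -
  obtain P D :: "complex^'n^'n" where inv: "invertible P" and dD: "diagonal_cmat D" and M: "M = P ** D ** matrix_inv P"
    using assms unfolding diagonalizable_cmat_def by blast
  note I = invertible_inv[OF inv]
  have MP: "M ** P = P ** D" unfolding M by (metis I(2) matrix_mul_assoc matrix_mul_rid)
  have col: "M *v column a P = D$a$a *s column a P" for a
  proof -
    have "(M *v column a P) $ i = (M ** P) $ i $ a" for i
      by (simp add: matrix_vector_mult_def matrix_matrix_mult_def column_def)
    moreover have "(P ** D) $ i $ a = P$i$a * D$a$a" for i
    proof -
      have "(P ** D) $ i $ a = (\<Sum>b\<in>UNIV. P$i$b * D$b$a)" by (simp add: matrix_matrix_mult_def)
      also have "\<dots> = (\<Sum>b\<in>UNIV. if b = a then P$i$b * D$b$a else 0)"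
        using dD unfolding diagonal_cmat_def by (intro sum.cong) auto
      finally show ?thesis by simp
    qed
    ultimately show ?thesis unfolding MP by (simp add: vec_eq_iff column_def mult.commute)
  qed
  define c where "c = matrix_inv P *v x"
  have x: "x = (\<Sum>a\<in>UNIV. c$a *s column a P)"
    unfolding c_def matrix_mult_sum[symmetric] matrix_vector_mul_assoc I(1) by simp
  define L where "L = (\<lambda>a. D$a$a) ` UNIV"
  define u where "u = (\<lambda>l. \<Sum>a\<in>{a. D$a$a = l}. c$a *s column a P)"
  have "x = (\<Sum>l\<in>L. u l)" unfolding x L_def u_def
    by (subst sum.image_gen[where g = "\<lambda>a. D$a$a"]) simp_all
  moreover have "M *v u l = l *s u l" for l
    unfolding u_def vec.sum vec.scale col smult_sum
    by (intro sum.cong refl) (simp add: vector_smult_assoc mult.commute)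
  moreover have "finite L" unfolding L_def by simp
  ultimately show ?thesis by blast
qed

lemma eigen_indep:
  fixes M :: "complex^'n::finite^'n"
  assumes "finite L"
  shows "(\<forall>l\<in>L. M *v u l = l *s u l) \<Longrightarrow> (\<Sum>l\<in>L. u l) = 0 \<Longrightarrow> \<forall>l\<in>L. u l = 0"
  using assms
proof (induction L arbitrary: u rule: finite_induct)
  case empty then show ?case by simp
next
  case (insert l0 L)
  have s: "u l0 + (\<Sum>l\<in>L. u l) = 0" using insert by simp
  define w where "w = (\<lambda>l. (l - l0) *s u l)"
  have "M *v (u l0 + (\<Sum>l\<in>L. u l)) - l0 *s (u l0 + (\<Sum>l\<in>L. u l)) = 0" using s by simp
  then have "(\<Sum>l\<in>L. w l) = 0"
    using insert.prems(1) unfolding w_def vec.add vec.sum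
    by (simp add: smult_sum sum_subtractf vector_sub_rdistrib)
  moreover have "\<forall>l\<in>L. M *v w l = l *s w l"
  proof
    fix l assume "l \<in> L"
    then have "M *v u l = l *s u l" using insert.prems(1) by simp
    then show "M *v w l = l *s w l" unfolding w_def
      by (simp only: vec.scale vector_smult_assoc mult.commute)
  qed
  ultimately have "\<forall>l\<in>L. w l = 0" using insert.IH by blast
  then have z: "\<forall>l\<in>L. u l = 0" using insert.hyps(2) unfolding w_def by auto
  then have "(\<Sum>l\<in>L. u l) = 0" by simp
  then have "u l0 = 0" using s by simp
  with z show ?case by simp
qed



definition B :: "complex^'n::finite \<Rightarrow> complex^'n \<Rightarrow> complex" where
  "B x y = (\<Sum>i\<in>UNIV. x$i * y$i)"

lemma B_sym: "B x y = B y x" unfolding B_def by (simp add: mult.commute)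
lemma B_add_r: "B x (y + z) = B x y + B x z" unfolding B_def by (simp add: algebra_simps sum.distrib)
lemma B_add_l: "B (y + z) x = B y x + B z x" unfolding B_def by (simp add: algebra_simps sum.distrib)
lemma B_diff_r: "B x (y - z) = B x y - B x z" unfolding B_def by (simp add: algebra_simps sum_subtractf)
lemma B_scale_r: "B x (c *s y) = c * B x y" unfolding B_def by (simp add: sum_distrib_left mult_ac)
lemma B_scale_l: "B (c *s y) x = c * B y x" unfolding B_def by (simp add: sum_distrib_left mult_ac)
lemma B_zero_r: "B x 0 = 0" unfolding B_def by simp
lemma B_sum_r: "B x (sum f A) = (\<Sum>a\<in>A. B x (f a))"
  by (induction A rule: infinite_finite_induct) (simp_all add: B_add_r B_zero_r)
lemma B_axis: "B w (axis i 1) = w $ i"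
proof -
  have "B w (axis i 1) = (\<Sum>j\<in>UNIV. if j = i then w$j else 0)"
    unfolding B_def axis_def by (intro sum.cong) auto
  then show ?thesis by simp
qed

lemma B_mat: "B x (M *v y) = B (transpose M *v x) y"
proof -
  have "B x (M *v y) = (\<Sum>i\<in>UNIV. \<Sum>j\<in>UNIV. x$i * M$i$j * y$j)"
    unfolding B_def matrix_vector_mult_def by (simp add: sum_distrib_left mult_ac)
  also have "\<dots> = (\<Sum>j\<in>UNIV. \<Sum>i\<in>UNIV. x$i * M$i$j * y$j)" by (rule sum.swap)
  also have "\<dots> = B (transpose M *v x) y"
    unfolding B_def matrix_vector_mult_def transpose_def by (simp add: sum_distrib_left mult_ac)
  finally show ?thesis .
qed

definition JK :: "('n::finite \<Rightarrow> 'n \<Rightarrow> 'n \<Rightarrow> complex) \<Rightarrow> 'n set \<Rightarrow> (complex^'n) set" where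
  "JK S K = {v. \<forall>k\<in>K. \<exists>\<mu>. slice S k *v v = \<mu> *s v}"

lemma slice_transpose: "symmetric_tensor S \<Longrightarrow> transpose (slice S k) = slice S k"
  unfolding symmetric_tensor_def slice_def transpose_def by (simp add: vec_eq_iff)

lemma joint_span:
  fixes S :: "'n::finite \<Rightarrow> 'n \<Rightarrow> 'n \<Rightarrow> complex"
  assumes diag: "\<forall>k. diagonalizable_cmat (slice S k)"
    and comm: "\<forall>k l. slice S k ** slice S l = slice S l ** slice S k"
  shows "x \<in> vec.span (JK S UNIV)"
proof -
  have "finite K \<Longrightarrow> \<forall>x. x \<in> vec.span (JK S K)" for K
  proof (induction K rule: finite_induct)
    case empty then show ?case by (simp add: JK_def vec.span_base)
  next
    case (insert k0 K)
    have "JK S K \<subseteq> vec.span (JK S (insert k0 K))"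
    proof
      fix v assume v: "v \<in> JK S K"
      obtain L u where L: "finite L" and eig: "\<forall>l\<in>L. slice S k0 *v u l = l *s u l"
        and vs: "v = (\<Sum>l\<in>L. u l)"
        using eigen_decomp[OF diag[rule_format, of k0], of v] by blast
      have "u l \<in> JK S (insert k0 K)" if l: "l \<in> L" for l
        unfolding JK_def mem_Collect_eq
      proof (intro ballI)
        fix k assume "k \<in> insert k0 K"
        then consider "k = k0" | "k \<in> K" by blast
        then show "\<exists>\<mu>. slice S k *v u l = \<mu> *s u l"
        proof cases
          case 1 then show ?thesis using eig l by blast
        next
          case 2
          then obtain \<mu> where mu: "slice S k *v v = \<mu> *s v" using v unfolding JK_def by blast
          define w where "w = (\<lambda>l. slice S k *v u l - \<mu> *s u l)"
          have "(\<Sum>l\<in>L. w l) = 0"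
            unfolding w_def sum_subtractf vec.sum[symmetric] smult_sum[symmetric] vs[symmetric] mu by simp
          moreover have "\<forall>l\<in>L. slice S k0 *v w l = l *s w l"
          proof
            fix l assume "l \<in> L"
            then have e: "slice S k0 *v u l = l *s u l" using eig by blast
            have "slice S k0 *v (slice S k *v u l) = slice S k *v (slice S k0 *v u l)"
              by (simp add: matrix_vector_mul_assoc comm[rule_format, of k0 k])
            then show "slice S k0 *v w l = l *s w l" unfolding w_def
              by (simp add: vec.diff vec.scale e vector_smult_assoc mult.commute vector_ssub_ldistrib)
          qed
          ultimately have "\<forall>l\<in>L. w l = 0" using eigen_indep[OF L] by blast
          then show ?thesis using l unfolding w_def by auto
        qed
      qed
      then show "v \<in> vec.span (JK S (insert k0 K))"
        unfolding vs by (intro vec.span_sum vec.span_base)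
    qed
    then have "vec.span (JK S K) \<subseteq> vec.span (JK S (insert k0 K))"
      by (intro vec.span_minimal vec.subspace_span)
    then show ?case using insert.IH by blast
  qed
  then show ?thesis by simp
qed



definition ON :: "(complex^'n::finite) set \<Rightarrow> bool" where
  "ON Q \<longleftrightarrow> (\<forall>q\<in>Q. B q q = 1) \<and> (\<forall>q\<in>Q. \<forall>q'\<in>Q. q \<noteq> q' \<longrightarrow> B q q' = 0)"

lemma B_sum_ON:
  assumes "finite Q" "ON Q" "q \<in> Q"
  shows "B q (\<Sum>v\<in>Q. c v *s v) = c q"
proof -
  have "B q (\<Sum>v\<in>Q. c v *s v) = (\<Sum>v\<in>Q. c v * B q v)" by (simp add: B_sum_r B_scale_r)
  also have "\<dots> = c q * B q q + (\<Sum>v\<in>Q - {q}. c v * B q v)"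
    using assms(1,3) by (simp add: sum.remove)
  also have "(\<Sum>v\<in>Q - {q}. c v * B q v) = 0"
    using assms(2,3) unfolding ON_def by (intro sum.neutral) auto
  finally show ?thesis using assms(2,3) unfolding ON_def by simp
qed

lemma ON_indep: "finite Q \<Longrightarrow> ON Q \<Longrightarrow> vec.independent Q"
  unfolding vec.independent_explicit using B_sum_ON by (metis B_zero_r)

lemma ON_card: "finite Q \<Longrightarrow> ON (Q::(complex^'n::finite) set) \<Longrightarrow> card Q \<le> CARD('n)"
  using ON_indep vec.independent_bound_general vec.dim_subset[of Q UNIV] vec.dim_UNIV card_cart_basis
  by (metis order_trans subset_UNIV)

lemma JK_scale: "v \<in> JK S K \<Longrightarrow> c *s v \<in> JK S K"
  unfolding JK_def mem_Collect_eq
proof (intro ballI)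
  fix k assume "\<forall>k\<in>K. \<exists>\<mu>. slice S k *v v = \<mu> *s v" "k \<in> K"
  then obtain \<mu> where "slice S k *v v = \<mu> *s v" by blast
  then have "slice S k *v (c *s v) = \<mu> *s (c *s v)"
    by (simp add: vec.scale vector_smult_assoc mult.commute)
  then show "\<exists>\<mu>. slice S k *v (c *s v) = \<mu> *s (c *s v)" by blast
qed

context
  fixes S :: "'n::finite \<Rightarrow> 'n \<Rightarrow> 'n \<Rightarrow> complex"
  assumes sym: "symmetric_tensor S"
    and diag: "\<forall>k. diagonalizable_cmat (slice S k)"
    and comm: "\<forall>k l. slice S k ** slice S l = slice S l ** slice S k"
begin

abbreviation "J \<equiv> JK S UNIV"

lemma same_eig:
  assumes "slice S k *v v = \<mu> *s v" "e \<in> J" "B v e \<noteq> 0"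
  shows "slice S k *v e = \<mu> *s e"
proof -
  obtain \<nu> where nu: "slice S k *v e = \<nu> *s e" using assms(2) unfolding JK_def by blast
  have "\<nu> * B v e = B v (slice S k *v e)" by (simp add: nu B_scale_r)
  also have "\<dots> = B (slice S k *v v) e" by (simp add: B_mat slice_transpose[OF sym])
  also have "\<dots> = \<mu> * B v e" by (simp add: assms(1) B_scale_l)
  finally have "\<nu> = \<mu>" using assms(3) by simp
  then show ?thesis using nu by simp
qed

lemma exists_ON_basis:
  "\<exists>Q. finite Q \<and> Q \<subseteq> J \<and> ON Q \<and> (\<forall>x. x \<in> vec.span Q)"
proof -
  define P where "P = (\<lambda>Q::(complex^'n) set. finite Q \<and> Q \<subseteq> J \<and> ON Q)"
  have "P {}" unfolding P_def ON_def by simp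
  moreover have "\<forall>Q. P Q \<longrightarrow> card Q < CARD('n) + 1" unfolding P_def using ON_card by fastforce
  ultimately obtain Q where PQ: "P Q" and maxQ: "\<forall>Q'. P Q' \<longrightarrow> card Q' \<le> card Q"
    using Lattices_Big.ex_has_greatest_nat[of P "{}" card "CARD('n) + 1"] by blast
  have fin: "finite Q" and QJ: "Q \<subseteq> J" and on: "ON Q" using PQ unfolding P_def by auto
  have "x \<in> vec.span Q" for x
  proof (rule ccontr)
    assume xn: "x \<notin> vec.span Q"
    define \<pi> where "\<pi> = (\<lambda>z. z - (\<Sum>q\<in>Q. B q z *s q))"
    have Bpi: "B q (\<pi> z) = 0" if "q \<in> Q" for q z
      unfolding \<pi>_def B_diff_r using B_sum_ON[OF fin on that, of "\<lambda>q. B q z"] by simp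
    have Bpi2: "B w (\<pi> z) = B w z" if "\<forall>q\<in>Q. B q w = 0" for w z
    proof -
      have "B w (\<Sum>q\<in>Q. B q z *s q) = 0"
        using that by (simp add: B_sum_r B_scale_r B_sym[of w])
      then show ?thesis unfolding \<pi>_def B_diff_r by simp
    qed
    have piJ: "\<pi> e \<in> J" if e: "e \<in> J" for e
      unfolding JK_def mem_Collect_eq
    proof
      fix k
      obtain \<mu> where mu: "slice S k *v e = \<mu> *s e" using e unfolding JK_def by blast
      have "slice S k *v (B q e *s q) = \<mu> *s (B q e *s q)" if "q \<in> Q" for q
      proof (cases "B q e = 0")
        case True then show ?thesis by simp
      next
        case False
        then have "B e q \<noteq> 0" by (simp add: B_sym)
        then have "slice S k *v q = \<mu> *s q" using same_eig[OF mu] QJ that by blast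
        then show ?thesis by (simp add: vec.scale vector_smult_assoc mult.commute)
      qed
      then have "slice S k *v (\<Sum>q\<in>Q. B q e *s q) = \<mu> *s (\<Sum>q\<in>Q. B q e *s q)"
        unfolding vec.sum smult_sum by (intro sum.cong) auto
      then show "\<exists>\<mu>. slice S k *v \<pi> e = \<mu> *s \<pi> e"
        unfolding \<pi>_def vec.diff mu by (intro exI[of _ \<mu>]) (simp add: vector_ssub_ldistrib)
    qed
    have pi_add: "\<pi> (a + b) = \<pi> a + \<pi> b" for a b
      unfolding \<pi>_def by (simp add: B_add_r vector_sadd_rdistrib sum.distrib algebra_simps)
    have pi_scale: "\<pi> (c *s a) = c *s \<pi> a" for c a
      unfolding \<pi>_def by (simp add: B_scale_r smult_sum vector_smult_assoc vector_ssub_ldistrib)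
    have pi0: "\<pi> 0 = 0" unfolding \<pi>_def by (simp add: B_zero_r)
    have pispan: "\<pi> y \<in> vec.span (\<pi> ` J)" for y
    proof (rule vec.span_induct[OF joint_span[OF diag comm, of y]])
      show "vec.subspace {y. \<pi> y \<in> vec.span (\<pi> ` J)}"
        unfolding vec.subspace_def using pi_add pi_scale pi0
        by (auto intro: vec.span_add vec.span_scale vec.span_zero)
      show "\<And>x. x \<in> J \<Longrightarrow> \<pi> x \<in> vec.span (\<pi> ` J)" by (intro vec.span_base) blast
    qed
    have "\<pi> x \<noteq> 0"
    proof
      assume "\<pi> x = 0"
      then have "x = (\<Sum>q\<in>Q. B q x *s q)" unfolding \<pi>_def by simp
      also have "\<dots> \<in> vec.span Q" by (intro vec.span_sum vec.span_scale vec.span_base)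
      finally show False using xn by simp
    qed
    have "\<exists>w\<in>\<pi> ` J. w \<noteq> 0"
    proof (rule ccontr)
      assume "\<not> ?thesis"
      then have "\<pi> ` J \<subseteq> {0}" by blast
      then have "vec.span (\<pi> ` J) \<subseteq> {0}" by (intro vec.span_minimal vec.subspace_single_0)
      then show False using pispan[of x] \<open>\<pi> x \<noteq> 0\<close> by blast
    qed
    then obtain w where wJ: "w \<in> J" and wV: "\<forall>q\<in>Q. B q w = 0" and wn: "w \<noteq> 0"
      using piJ Bpi by blast
    obtain i where wi: "w $ i \<noteq> 0" using wn by (auto simp: vec_eq_iff)
    have "B w (\<pi> (axis i 1)) \<noteq> 0" by (simp add: Bpi2[OF wV] B_axis wi)
    have "\<exists>e\<in>\<pi> ` J. B w e \<noteq> 0"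
    proof (rule ccontr)
      assume "\<not> ?thesis"
      then have "\<pi> (axis i 1) \<in> {z. B w z = 0}"
        using vec.span_minimal[of "\<pi> ` J" "{z. B w z = 0}"] pispan[of "axis i 1"]
        unfolding vec.subspace_def by (auto simp: B_add_r B_scale_r B_zero_r)
      then show False using \<open>B w (\<pi> (axis i 1)) \<noteq> 0\<close> by simp
    qed
    then obtain e where eJ: "e \<in> J" and eV: "\<forall>q\<in>Q. B q e = 0" and we: "B w e \<noteq> 0"
      using piJ Bpi by blast
    have "\<exists>v. v \<in> J \<and> (\<forall>q\<in>Q. B q v = 0) \<and> B v v \<noteq> 0"
    proof (cases "B w w = 0 \<and> B e e = 0")
      case False then show ?thesis using wJ wV eJ eV by blast
    next
      case True
      have "w + e \<in> J" unfolding JK_def mem_Collect_eq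
      proof
        fix k
        obtain \<mu> where mu: "slice S k *v w = \<mu> *s w" using wJ unfolding JK_def by blast
        have "slice S k *v e = \<mu> *s e" using same_eig[OF mu eJ we] .
        then show "\<exists>\<mu>. slice S k *v (w + e) = \<mu> *s (w + e)"
          using mu by (intro exI[of _ \<mu>]) (simp add: vec.add vector_add_ldistrib)
      qed
      moreover have "\<forall>q\<in>Q. B q (w + e) = 0" using wV eV by (simp add: B_add_r)
      moreover have "B (w + e) (w + e) = 2 * B w e"
        using True by (simp add: B_add_r B_add_l B_sym[of e w])
      ultimately show ?thesis using we by (intro exI[of _ "w + e"]) simp
    qed
    then obtain v where vJ: "v \<in> J" and vV: "\<forall>q\<in>Q. B q v = 0" and vv: "B v v \<noteq> 0" by blast
    define v' where "v' = (1 / csqrt (B v v)) *s v"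
    have v'1: "B v' v' = 1"
    proof -
      define c where "c = csqrt (B v v)"
      have c2: "c * c = B v v" unfolding c_def using power2_csqrt[of "B v v"] by (simp add: power2_eq_square)
      then have "c \<noteq> 0" using vv by auto
      have "B v' v' = (1/c) * ((1/c) * B v v)" unfolding v'_def B_scale_l B_scale_r c_def ..
      also have "\<dots> = (1/c) * ((1/c) * (c * c))" by (simp only: c2)
      also have "\<dots> = 1" using \<open>c \<noteq> 0\<close> by simp
      finally show ?thesis .
    qed
    have v'J: "v' \<in> J" using vJ unfolding v'_def by (rule JK_scale)
    have v'V: "\<forall>q\<in>Q. B q v' = 0" using vV unfolding v'_def by (simp add: B_scale_r)
    have v'Q: "v' \<notin> Q" using v'1 v'V by auto
    have v'V2: "\<forall>q\<in>Q. B v' q = 0" using v'V by (simp add: B_sym)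
    have "ON (insert v' Q)" using on v'1 v'V v'V2 unfolding ON_def by blast
    then have "P (insert v' Q)" unfolding P_def using fin QJ v'J by simp
    then have "card (insert v' Q) \<le> card Q" using maxQ by blast
    then show False using v'Q fin by simp
  qed
  then show ?thesis using fin QJ on by blast
qed

end


lemma converse:
  fixes S :: "'n::finite \<Rightarrow> 'n \<Rightarrow> 'n \<Rightarrow> complex"
  assumes sym: "symmetric_tensor S"
    and diag: "\<forall>k. diagonalizable_cmat (slice S k)"
    and comm: "\<forall>k l. slice S k ** slice S l = slice S l ** slice S k"
  shows "in_OW S"
proof -
  obtain Q where fin: "finite Q" and QJ: "Q \<subseteq> JK S UNIV" and on: "ON Q" and sp: "\<forall>x. x \<in> vec.span Q"
    using exists_ON_basis[OF sym diag comm] by blast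
  have "card Q \<le> CARD('n)" using ON_card[OF fin on] .
  moreover have "vec.dim (UNIV::(complex^'n) set) \<le> card Q"
    using vec.span_card_ge_dim[of Q UNIV] fin sp by auto
  ultimately have cQ: "card Q = card (UNIV::'n set)" using vec.dim_UNIV card_cart_basis[where 'a=complex and 'i='n] by auto
  obtain g where g: "bij_betw g (UNIV::'n set) Q"
    using finite_same_card_bij[of "UNIV::'n set" Q] fin cQ by auto
  have gQ: "g a \<in> Q" for a using g unfolding bij_betw_def by auto
  have ginj: "g a = g b \<Longrightarrow> a = b" for a b using g unfolding bij_betw_def inj_on_def by auto
  define A :: "complex^'n^'n" where "A = (\<chi> a i. g a $ i)"
  have "A ** transpose A = mat 1"
  proof -
    have "(A ** transpose A) $ a $ b = mat 1 $ a $ b" for a b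
    proof -
      have "(A ** transpose A) $ a $ b = B (g a) (g b)"
        by (simp add: A_def matrix_matrix_mult_def transpose_def B_def)
      also have "\<dots> = (if a = b then 1 else 0)" using on gQ[of a] gQ[of b] ginj[of a b] unfolding ON_def by (cases "a = b") auto
      finally show ?thesis by (simp add: mat_def)
    qed
    then show ?thesis by (simp add: vec_eq_iff)
  qed
  then have AtA: "transpose A ** A = mat 1" by (rule matrix_left_right_inverse1)
  have orth: "(\<Sum>a\<in>UNIV. g a $ j * g a $ c) = (if j = c then 1 else 0)" for j c
  proof -
    have "(transpose A ** A) $ j $ c = (\<Sum>a\<in>UNIV. g a $ j * g a $ c)"
      by (simp add: A_def matrix_matrix_mult_def transpose_def)
    then show ?thesis using AtA by (simp add: mat_def)
  qed
  have "\<forall>a. \<exists>m. \<forall>k. slice S k *v g a = m k *s g a"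
  proof
    fix a
    have "\<forall>k. \<exists>\<mu>. slice S k *v g a = \<mu> *s g a" using QJ gQ[of a] unfolding JK_def by blast
    then show "\<exists>m. \<forall>k. slice S k *v g a = m k *s g a" by metis
  qed
  then obtain mu where mu: "\<And>a k. slice S k *v g a = mu a k *s g a" by metis
  have slv: "(slice S k *v v) $ i = (\<Sum>c\<in>UNIV. S i c k * v $ c)" for k v i
    by (simp add: slice_def matrix_vector_mult_def)
  have Sdec: "S i j k = (\<Sum>a\<in>UNIV. mu a k * g a $ i * g a $ j)" for i j k
  proof -
    have "S i j k = (\<Sum>c\<in>UNIV. S i c k * (if c = j then 1 else 0))"
      by (simp add: if_distrib cong: if_cong)
    also have "\<dots> = (\<Sum>c\<in>UNIV. \<Sum>a\<in>UNIV. S i c k * g a $ c * g a $ j)"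
      unfolding orth[symmetric] by (simp add: sum_distrib_left mult_ac)
    also have "\<dots> = (\<Sum>a\<in>UNIV. \<Sum>c\<in>UNIV. S i c k * g a $ c * g a $ j)" by (rule sum.swap)
    also have "\<dots> = (\<Sum>a\<in>UNIV. (slice S k *v g a) $ i * g a $ j)"
      unfolding slv by (simp add: sum_distrib_right)
    also have "\<dots> = (\<Sum>a\<in>UNIV. mu a k * g a $ i * g a $ j)" by (simp add: mu)
    finally show ?thesis .
  qed
  define \<beta> where "\<beta> = (\<lambda>a. \<Sum>r\<in>UNIV. g a $ r * mu a r)"
  have gg: "B (g a) (g a) = 1" for a using on gQ unfolding ON_def by blast
  have mub: "mu a k = \<beta> a * g a $ k" for a k
  proof -
    have "(\<Sum>r\<in>UNIV. g a $ r * (slice S k *v g a) $ r) = mu a k * B (g a) (g a)"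
      by (simp add: mu B_def sum_distrib_left mult_ac)
    then have 1: "(\<Sum>r\<in>UNIV. g a $ r * (slice S k *v g a) $ r) = mu a k" using gg by simp
    have "(\<Sum>r\<in>UNIV. g a $ r * (slice S k *v g a) $ r) = (\<Sum>r\<in>UNIV. g a $ r * (slice S r *v g a) $ k)"
      unfolding slv using sym unfolding symmetric_tensor_def by (intro sum.cong refl) metis
    also have "\<dots> = \<beta> a * g a $ k" by (simp add: mu \<beta>_def sum_distrib_left mult_ac)
    finally show ?thesis using 1 by simp
  qed
  have Seq: "S = (\<lambda>i j k. \<Sum>a\<in>UNIV. \<beta> a * g a $ i * g a $ j * g a $ k)"
    by (intro ext) (simp add: Sdec mub mult_ac)
  have "cubic_form S x = (\<Sum>a\<in>UNIV. \<beta> a * ((A *v x) $ a)^3)" for x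
    unfolding Seq cubic_decomp by (simp add: A_def matrix_vector_mult_def)
  then show ?thesis unfolding in_OW_def using AtA by blast
qed


theorem theorem10:
  fixes S :: "'n::finite \<Rightarrow> 'n \<Rightarrow> 'n \<Rightarrow> complex"
  assumes "symmetric_tensor S"
  shows "in_OW S \<longleftrightarrow>
           ((\<forall>k. diagonalizable_cmat (slice S k)) \<and>
            (\<forall>k l. slice S k ** slice S l = slice S l ** slice S k))"
  using forward[OF assms] converse[OF assms] by blast

end
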